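(* Let $n\ge2$ be an integer and let $w>0$ be fixed. For $\alpha>0$ let $\overline{G}_\alpha(x)=\int_x^\infty\frac{1}{\Gamma(\alpha)}e^{-t}t^{\alpha-1}\,dt$, $x\ge0$. For $\mu\ge0$ define $$I_1(\mu)=\int_0^{\mu/n}ue^{2nu}\overline{G}_{2n}\!\left(\frac{u(1+nw)}{w}\right)du,\qquad I_2(\mu)=\int_0^{\mu/n}e^{2nu}\overline{G}_{2n+1}\!\left(\frac{u(1+nw)}{w}\right)du,$$ $$I_3(\mu)=\frac{\mu}{1+nI_2(\mu)},\qquad I_4(\mu)=\frac{I_1(\mu)}{1+nI_2(\mu)},\qquad k(\mu)=\frac{1+\mu-2n^2I_1(\mu)}{1+nI_2(\mu)}.$$ Then: (i) $\lim_{\mu\to\infty}I_1(\mu)=\left(\frac{1+nw}{1-nw}\right)^{2n}\left[\frac{w}{1-nw}-\frac{1}{4n^2}\right]+\frac{1}{4n^2}$ if $0<w<\frac1n$, and $=\infty$ if $w\ge\frac1n$; (ii) $\lim_{\mu\to\infty}I_2(\mu)=\frac{1}{2n}\left[\left(\frac{1+nw}{1-nw}\right)^{2n+1}-1\right]$ if $0<w<\frac1n$, and $=\infty$ if $w\ge\frac1n$; (iii) $\lim_{\mu\to\infty}I_3(\mu)=\infty$ if $0<w<\frac1n$, and $=0$ if $w\ge\frac1n$; (iv) $\lim_{\mu\to\infty}I_4(\mu)=\dfrac{\lim_{\mu\to\infty}I_1(\mu)}{1+n\lim_{\mu\to\infty}I_2(\mu)}$ if $0<w<\frac1n$, and $=\frac{2w}{1+nw}$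 if $w\ge\frac1n$; (v) $\lim_{\mu\to\infty}k(\mu)=\infty$ if $0<w<\frac1n$, and $=-\frac{4n^2w}{1+nw}$ if $w\ge\frac1n$; (vi) $\sup_{\mu\ge0}k(\mu)=\infty$ if $0<w<\frac1n$, and $=1$ if $w\ge\frac1n$; (vii) if $w\ge\frac1n$ then $\inf_{\mu\ge0}k(\mu)=-\frac{4n^2w}{1+nw}$; and for every $w>0$, $\inf_{\mu\ge0}k(\mu)\ge-\frac{4n^2w}{1+nw}$.
   Context: $\Gamma$ denotes the gamma function, so $\overline{G}_\alpha$ is the survival function of the Gamma$(\alpha,1)$ distribution. *)

theory Defs
  imports "HOL-Analysis.Analysis"
begin

definition Gbar :: "real \<Rightarrow> real \<Rightarrow> real" where
  "Gbar \<alpha> x = (LBINT t:{x..}. exp (- t) * t powr (\<alpha> - 1) / Gamma \<alpha>)"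

definition I1 :: "nat \<Rightarrow> real \<Rightarrow> real \<Rightarrow> real" where
  "I1 n w \<mu> = (LBINT u:{0..\<mu> / real n}.
      u * exp (2 * real n * u) * Gbar (2 * real n) (u * (1 + real n * w) / w))"

definition I2 :: "nat \<Rightarrow> real \<Rightarrow> real \<Rightarrow> real" where
  "I2 n w \<mu> = (LBINT u:{0..\<mu> / real n}.
      exp (2 * real n * u) * Gbar (2 * real n + 1) (u * (1 + real n * w) / w))"

definition I3 :: "nat \<Rightarrow> real \<Rightarrow> real \<Rightarrow> real" where
  "I3 n w \<mu> = \<mu> / (1 + real n * I2 n w \<mu>)"

definition I4 :: "nat \<Rightarrow> real \<Rightarrow> real \<Rightarrow> real" where
  "I4 n w \<mu> = I1 n w \<mu> / (1 + real n * I2 n w \<mu>)"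

definition kfun :: "nat \<Rightarrow> real \<Rightarrow> real \<Rightarrow> real" where
  "kfun n w \<mu> = (1 + \<mu> - 2 * (real n)^2 * I1 n w \<mu>) / (1 + real n * I2 n w \<mu>)"

end

theory Submission
  imports Defs
begin

lemma G_deriv:
  "DERIV (\<lambda>y::real. - exp (-y) * (\<Sum>j\<le>k. y^j / fact j)) y :> y^k * exp (-y) / fact k"
proof (induction k)
  case 0 show ?case by (auto intro!: derivative_eq_intros)
next
  case (Suc k)
  have d2: "DERIV (\<lambda>y::real. exp (-y) * (y^Suc k / fact (Suc k))) y :> y^k * exp (-y) / fact k - exp (-y) * (y^Suc k / fact (Suc k))"
    apply (rule derivative_eq_intros refl)+
    apply simp
    apply (rule refl)
    apply (simp add: fact_Suc[of k] divide_simps del: fact_Suc)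
    done
  have "DERIV (\<lambda>y. - exp (-y) * (\<Sum>j\<le>k. y^j / fact j) - exp (-y) * (y^Suc k / fact (Suc k))) y :>
     y^k * exp (-y) / fact k - (y^k * exp (-y) / fact k - exp (-y) * (y^Suc k / fact (Suc k)))"
    by (intro DERIV_diff Suc d2)
  also have "(\<lambda>y. - exp (-y) * (\<Sum>j\<le>k. y^j / fact j) - exp (-y) * (y^Suc k / fact (Suc k)))
      = (\<lambda>y. - exp (-y) * (\<Sum>j\<le>Suc k. y^j / fact j))"
    by (simp add: field_simps)
  also have "y^k * exp (-y) / fact k - (y^k * exp (-y) / fact k - exp (-y) * (y^Suc k / fact (Suc k)))
     = y^Suc k * exp (-y) / fact (Suc k)"
    by simp
  finally show ?case .
qed

lemma gamma_tail:
  fixes b x :: real and k :: nat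
  assumes b: "b > 0" and x: "x \<ge> 0"
  shows "has_bochner_integral lborel (\<lambda>t. indicator {x..} t * (t^k * exp (-(b*t))))
           (fact k / b^Suc k * (exp (-(b*x)) * (\<Sum>j\<le>k. (b*x)^j / fact j)))"
proof -
  define G where "G = (\<lambda>y::real. - exp (-y) * (\<Sum>j\<le>k. y^j / fact j))"
  define F where "F = (\<lambda>t. fact k / b^Suc k * G (b*t))"
  have dF: "DERIV F t :> t^k * exp (-(b*t))" for t
  proof -
    have "DERIV (\<lambda>t. G (b*t)) t :> (b*t)^k * exp (-(b*t)) / fact k * b"
      by (rule DERIV_chain2[where f=G and g="\<lambda>t. b*t"])
         (use G_deriv[where y="b*t" and k=k, folded G_def] in \<open>auto intro!: derivative_eq_intros\<close>)
    then have "DERIV F t :> fact k / b^Suc k * ((b*t)^k * exp (-(b*t)) / fact k * b)"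
      unfolding F_def by (intro DERIV_cmult)
    also have "fact k / b^Suc k * ((b*t)^k * exp (-(b*t)) / fact k * b) = t^k * exp (-(b*t))"
      using b by (simp add: power_mult_distrib field_simps)
    finally show ?thesis .
  qed
  have G0: "(G \<longlongrightarrow> 0) at_top"
  proof -
    have "((\<lambda>y::real. (\<Sum>j\<le>k. (y^j / exp y) / fact j)) \<longlongrightarrow> 0) at_top"
      by (intro tendsto_null_sum tendsto_divide_zero tendsto_power_div_exp_0)
    then have "((\<lambda>y::real. - (\<Sum>j\<le>k. (y^j / exp y) / fact j)) \<longlongrightarrow> 0) at_top"
      using tendsto_minus by fastforce
    moreover have "G = (\<lambda>y. - (\<Sum>j\<le>k. (y^j / exp y) / fact j))"
      unfolding G_def by (auto simp: sum_distrib_left exp_minus field_simps sum_negf)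
    ultimately show ?thesis by simp
  qed
  have "((\<lambda>t. G (b*t)) \<longlongrightarrow> 0) at_top"
  proof (rule filterlim_compose[OF G0])
    show "filterlim (\<lambda>t::real. b*t) at_top at_top"
      using b by (intro filterlim_tendsto_pos_mult_at_top[OF tendsto_const] filterlim_ident) auto
  qed
  then have F0: "(F \<longlongrightarrow> 0) at_top"
    unfolding F_def using tendsto_mult_right_zero by blast
  have nn: "(\<integral>\<^sup>+t. ennreal (t^k * exp (-(b*t))) * indicator {x ..} t \<partial>lborel) = 0 - F x"
    by (rule nn_integral_FTC_atLeast[OF _ dF _ F0]) (use x in auto)
  have val: "0 - F x = fact k / b^Suc k * (exp (-(b*x)) * (\<Sum>j\<le>k. (b*x)^j / fact j))"
    unfolding F_def G_def by simp
  show ?thesis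
  proof (rule has_bochner_integral_nn_integral)
    show "(\<lambda>t. indicator {x..} t * (t^k * exp (-(b*t)))) \<in> borel_measurable lborel" by simp
    show "AE t in lborel. 0 \<le> indicator {x..} t * (t^k * exp (-(b*t)))"
      using x by (auto split: split_indicator)
    show "0 \<le> fact k / b^Suc k * (exp (-(b*x)) * (\<Sum>j\<le>k. (b*x)^j / fact j))"
      using b x by (intro mult_nonneg_nonneg divide_nonneg_pos sum_nonneg) auto
    have "(\<integral>\<^sup>+t. ennreal (indicator {x..} t * (t^k * exp (-(b*t)))) \<partial>lborel)
        = (\<integral>\<^sup>+t. ennreal (t^k * exp (-(b*t))) * indicator {x ..} t \<partial>lborel)"
      by (intro nn_integral_cong) (auto split: split_indicator)
    then show "(\<integral>\<^sup>+t. ennreal (indicator {x..} t * (t^k * exp (-(b*t)))) \<partial>lborel)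
        = ennreal (fact k / b^Suc k * (exp (-(b*x)) * (\<Sum>j\<le>k. (b*x)^j / fact j)))"
      using nn val by simp
  qed
qed

definition E :: "nat \<Rightarrow> real \<Rightarrow> real" where
  "E m x = (\<Sum>j<m. x^j / fact j)"

lemma Gbar_nat:
  assumes m: "m \<ge> 2" and x: "x \<ge> 0"
  shows "Gbar (real m) x = exp (-x) * E m x"
proof -
  obtain k where k: "m = Suc k" "k \<ge> 1" using m by (cases m) auto
  have Gm: "Gamma (real m) = fact k"
    using Gamma_fact[of k] k by (simp add: add.commute)
  have eq: "exp (- t) * t powr (real m - 1) / Gamma (real m) = (1 / fact k) * (t^k * exp (-(1*t)))"
    if "t \<in> {x..}" for t
  proof -
    have "t \<ge> 0" using that x by auto
    then have "t powr (real m - 1) = t^k"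
      using k powr_realpow'[of t k] by simp
    then show ?thesis using Gm by simp
  qed
  have "Gbar (real m) x = (LBINT t:{x..}. (1 / fact k) * (t^k * exp (-(1*t))))"
    unfolding Gbar_def by (rule set_lebesgue_integral_cong) (use eq in auto)
  also have "\<dots> = integral\<^sup>L lborel (\<lambda>t. (1 / fact k) * (indicator {x..} t * (t^k * exp (-(1*t)))))"
    unfolding set_lebesgue_integral_def by (intro Bochner_Integration.integral_cong) auto
  also have "\<dots> = (1 / fact k) * (fact k / 1^Suc k * (exp (-(1*x)) * (\<Sum>j\<le>k. (1*x)^j / fact j)))"
    by (intro has_bochner_integral_integral_eq has_bochner_integral_mult_right gamma_tail) (use x in auto)
  also have "\<dots> = exp (-x) * E m x"
    unfolding E_def k using lessThan_Suc_atMost by simp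
  finally show ?thesis .
qed

definition aa :: "nat \<Rightarrow> real \<Rightarrow> real" where "aa n w = (1 + real n * w) / w"
definition bb :: "nat \<Rightarrow> real \<Rightarrow> real" where "bb n w = aa n w - 2 * real n"
definition g1 :: "nat \<Rightarrow> real \<Rightarrow> real \<Rightarrow> real" where
  "g1 n w u = u * exp (- (bb n w * u)) * E (2*n) (aa n w * u)"
definition g2 :: "nat \<Rightarrow> real \<Rightarrow> real \<Rightarrow> real" where
  "g2 n w u = exp (- (bb n w * u)) * E (2*n+1) (aa n w * u)"

lemma continuous_E [continuous_intros]:
  "continuous_on S f \<Longrightarrow> continuous_on S (\<lambda>x. E m (f x))"
  unfolding E_def by (intro continuous_intros) auto

lemma cont_g1: "continuous_on S (g1 n w)"
  unfolding g1_def by (intro continuous_intros)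
lemma cont_g2: "continuous_on S (g2 n w)"
  unfolding g2_def by (intro continuous_intros)

lemma E_nonneg: "x \<ge> 0 \<Longrightarrow> E m x \<ge> 0"
  unfolding E_def by (intro sum_nonneg) auto

lemma E_ge_1: "x \<ge> 0 \<Longrightarrow> m \<ge> 1 \<Longrightarrow> E m x \<ge> 1"
proof -
  assume x: "x \<ge> 0" and m: "m \<ge> 1"
  have "E m x = 1 + (\<Sum>j\<in>{1..<m}. x^j / fact j)"
    unfolding E_def lessThan_atLeast0 using m by (simp add: sum.atLeast_Suc_lessThan)
  also have "\<dots> \<ge> 1" using x by (intro add_increasing2 sum_nonneg) auto
  finally show ?thesis .
qed

lemma E_ge_lin: "x \<ge> 0 \<Longrightarrow> m \<ge> 2 \<Longrightarrow> E m x \<ge> 1 + x"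
proof -
  assume x: "x \<ge> 0" and m: "m \<ge> 2"
  have "E m x = (\<Sum>j<2. x^j / fact j) + (\<Sum>j\<in>{2..<m}. x^j / fact j)"
    unfolding E_def lessThan_atLeast0 using m by (simp add: sum.atLeast_Suc_lessThan numeral_2_eq_2)
  also have "(\<Sum>j<2. x^j / fact j) = 1 + x" by (simp add: numeral_2_eq_2)
  finally show ?thesis using x by (auto intro!: sum_nonneg)
qed

lemma E_Suc: "E (Suc m) x = E m x + x^m / fact m"
  unfolding E_def by simp

lemma E_ineq1: "x \<ge> 0 \<Longrightarrow> x * E m x \<le> real m * E (Suc m) x"
proof -
  assume x: "x \<ge> 0"
  have "x * E m x = (\<Sum>j<m. real (Suc j) * (x^Suc j / fact (Suc j)))"
    unfolding E_def sum_distrib_left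
  proof (intro sum.cong refl)
    fix j assume "j \<in> {..<m}"
    have "fact (Suc j) = (real (Suc j)) * (fact j :: real)" by (rule fact_Suc)
    then show "x * (x ^ j / fact j) = real (Suc j) * (x ^ Suc j / fact (Suc j))"
      by (simp del: fact_Suc of_nat_Suc add: field_simps)
  qed
  also have "\<dots> \<le> (\<Sum>j<m. real m * (x^Suc j / fact (Suc j)))"
    using x by (intro sum_mono mult_right_mono) auto
  also have "\<dots> = real m * (\<Sum>j<m. x^Suc j / fact (Suc j))"
    by (simp add: sum_distrib_left)
  also have "(\<Sum>j<m. x^Suc j / fact (Suc j)) \<le> E (Suc m) x"
    unfolding E_def by (subst sum.lessThan_Suc_shift) (auto simp del: fact_Suc)
  finally show ?thesis by (simp add: mult_left_mono)
qed

lemma E_ineq2: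
  assumes x: "x \<ge> 0" and m: "m \<ge> 1"
  shows "real m * E (Suc m) x - x * E m x \<le> real m * E m x"
proof -
  obtain k where k: "m = Suc k" using m by (cases m) auto
  have "x * E m x \<ge> x * (x^k / fact k)"
    using x unfolding k E_Suc by (intro mult_left_mono) (auto intro!: E_nonneg)
  also have "x * (x^k / fact k) = real m * (x^m / fact m)"
  proof -
    have "fact (Suc k) = (real (Suc k)) * (fact k :: real)" by (rule fact_Suc)
    then show ?thesis unfolding k by (simp del: fact_Suc of_nat_Suc add: field_simps)
  qed
  finally show ?thesis unfolding E_Suc by (simp add: algebra_simps)
qed

lemma E_upper:
  assumes x: "x \<ge> 1"
  shows "E m x \<le> real m * x^(m - 1)"
proof -
  have "E m x \<le> (\<Sum>j<m. x^(m-1))"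
    unfolding E_def
  proof (intro sum_mono)
    fix j assume j: "j \<in> {..<m}"
    have "x^j / fact j \<le> x^j / 1" using x by (intro divide_left_mono) auto
    also have "x^j \<le> x^(m-1)" using x j by (intro power_increasing) auto
    finally show "x^j / fact j \<le> x^(m-1)" by simp
  qed
  then show ?thesis by simp
qed

lemma E_lower: "x \<ge> 0 \<Longrightarrow> E (Suc m) x \<ge> x^m / fact m"
  unfolding E_Suc by (auto intro!: E_nonneg)

lemma E_pos: "x \<ge> 0 \<Longrightarrow> m \<ge> 1 \<Longrightarrow> E m x > 0"
  using E_ge_1[of x m] by simp

lemma ratio_lim:
  assumes m: "m \<ge> 1"
  shows "((\<lambda>x. x * E m x / E (Suc m) x) \<longlongrightarrow> real m) at_top"
proof (rule tendsto_sandwich[where f="\<lambda>x. real m - real m * (real m * fact m) / x" and h="\<lambda>x. real m"])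
  show "((\<lambda>x. real m - real m * (real m * fact m) / x) \<longlongrightarrow> real m) at_top"
    by (rule tendsto_eq_intros tendsto_divide_0[OF tendsto_const] filterlim_ident filterlim_at_top_imp_at_infinity refl)+ simp
  show "((\<lambda>x. real m) \<longlongrightarrow> real m) at_top" by simp
  show "\<forall>\<^sub>F x in at_top. x * E m x / E (Suc m) x \<le> real m"
    using eventually_ge_at_top[of "0::real"]
  proof eventually_elim
    case (elim x)
    then show ?case using E_ineq1[of x m] E_pos[of x "Suc m"] by (simp add: divide_simps)
  qed
  show "\<forall>\<^sub>F x in at_top. real m - real m * (real m * fact m) / x \<le> x * E m x / E (Suc m) x"
    using eventually_ge_at_top[of "1::real"]
  proof eventually_elim
    case (elim x)
    have x0: "x > 0" using elim by simp
    have Ep: "E (Suc m) x > 0" using E_pos[of x "Suc m"] elim by simp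
    have l: "E (Suc m) x \<ge> x^m / fact m" using E_lower[of x m] elim by simp
    have u: "E m x \<le> real m * x^(m-1)" using E_upper[of x m] elim by simp
    have e2: "real m * E (Suc m) x - x * E m x \<le> real m * E m x" using E_ineq2[of x m] elim m by simp
    have xm: "x^m = x * x^(m-1)" using m by (cases m) auto
    have "real m * E m x \<le> real m * (real m * x^(m-1))" using u by (intro mult_left_mono) auto
    also have "\<dots> = (real m * (real m * fact m) / x) * (x^m / fact m)"
      using x0 xm by (simp add: field_simps)
    also have "\<dots> \<le> (real m * (real m * fact m) / x) * E (Suc m) x"
      using l x0 by (intro mult_left_mono) auto
    finally have "real m * E (Suc m) x - x * E m x \<le> (real m * (real m * fact m) / x) * E (Suc m) x"
      using e2 by linarith
    then show ?case using Ep by (simp add: field_simps)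
  qed
qed

lemma exp_combine: "exp (2 * real n * u) * exp (- (aa n w * u)) = exp (- (bb n w * u))"
  unfolding bb_def by (simp add: exp_add[symmetric] algebra_simps)

lemma integrand1:
  assumes n: "n \<ge> 1" and w: "w > 0" and u: "u \<ge> 0"
  shows "u * exp (2 * real n * u) * Gbar (2 * real n) (u * (1 + real n * w) / w) = g1 n w u"
proof -
  have a: "u * (1 + real n * w) / w = aa n w * u" unfolding aa_def by simp
  have ap: "aa n w * u \<ge> 0" unfolding aa_def using w u by (auto intro!: mult_nonneg_nonneg divide_nonneg_pos)
  have "Gbar (2 * real n) (aa n w * u) = exp (- (aa n w * u)) * E (2*n) (aa n w * u)"
    using Gbar_nat[of "2*n" "aa n w * u"] n ap by simp
  then show ?thesis unfolding a g1_def using exp_combine[of n u w]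
    by (simp add: mult.assoc[symmetric])
qed

lemma integrand2:
  assumes n: "n \<ge> 1" and w: "w > 0" and u: "u \<ge> 0"
  shows "exp (2 * real n * u) * Gbar (2 * real n + 1) (u * (1 + real n * w) / w) = g2 n w u"
proof -
  have a: "u * (1 + real n * w) / w = aa n w * u" unfolding aa_def by simp
  have ap: "aa n w * u \<ge> 0" unfolding aa_def using w u by (auto intro!: mult_nonneg_nonneg divide_nonneg_pos)
  have "Gbar (2 * real n + 1) (aa n w * u) = exp (- (aa n w * u)) * E (2*n+1) (aa n w * u)"
    using Gbar_nat[of "2*n+1" "aa n w * u"] n ap by (simp add: add.commute)
  then show ?thesis unfolding a g2_def using exp_combine[of n u w]
    by (simp add: mult.assoc[symmetric])
qed

lemma I1_LB: "n \<ge> 1 \<Longrightarrow> w > 0 \<Longrightarrow> I1 n w \<mu> = (LBINT u:{0..\<mu> / real n}. g1 n w u)"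
  unfolding I1_def by (rule set_lebesgue_integral_cong) (auto intro!: integrand1)

lemma I2_LB: "n \<ge> 1 \<Longrightarrow> w > 0 \<Longrightarrow> I2 n w \<mu> = (LBINT u:{0..\<mu> / real n}. g2 n w u)"
  unfolding I2_def by (rule set_lebesgue_integral_cong) (auto intro!: integrand2)

lemma I1_HK: "n \<ge> 1 \<Longrightarrow> w > 0 \<Longrightarrow> I1 n w \<mu> = integral {0..\<mu> / real n} (g1 n w)"
  using I1_LB set_borel_integral_eq_integral(2)[OF borel_integrable_atLeastAtMost'[OF cont_g1]] by simp

lemma I2_HK: "n \<ge> 1 \<Longrightarrow> w > 0 \<Longrightarrow> I2 n w \<mu> = integral {0..\<mu> / real n} (g2 n w)"
  using I2_LB set_borel_integral_eq_integral(2)[OF borel_integrable_atLeastAtMost'[OF cont_g2]] by simp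

lemma deriv_int:
  fixes g :: "real \<Rightarrow> real"
  assumes cont: "\<And>S. continuous_on S g" and T: "T > 0"
  shows "DERIV (\<lambda>T. integral {0..T} g) T :> g T"
proof -
  have "((\<lambda>T. integral {0..T} g) has_field_derivative g T) (at T within {0..T+1})"
    using integral_has_real_derivative[OF cont, of T] T by simp
  then have "((\<lambda>T. integral {0..T} g) has_field_derivative g T) (at T within {0<..<T+1})"
    by (rule DERIV_subset) auto
  then show ?thesis
    using at_within_open[of T "{0<..<T+1}"] T by simp
qed

lemma deriv_int_scaled:
  fixes g :: "real \<Rightarrow> real"
  assumes cont: "\<And>S. continuous_on S g" and mu: "\<mu> > 0" and n: "n \<ge> 1"
  shows "DERIV (\<lambda>\<mu>. integral {0..\<mu> / real n} g) \<mu> :> g (\<mu> / real n) * (1 / real n)"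
proof -
  have d: "DERIV (\<lambda>T. integral {0..T} g) (\<mu> / real n) :> g (\<mu> / real n)"
    using deriv_int[OF cont, of "\<mu> / real n"] mu n by simp
  show ?thesis
    by (rule DERIV_chain2[where f="\<lambda>T. integral {0..T} g" and g="\<lambda>\<mu>. \<mu> / real n"])
       (use d n in \<open>auto intro!: derivative_eq_intros\<close>)
qed

lemma base_int:
  fixes b :: real
  assumes b: "b > 0"
  shows "has_bochner_integral lborel (\<lambda>t. indicator {0..} t * (t^k * exp (-(b*t)))) (fact k / b^Suc k)"
proof -
  have s: "(\<Sum>j\<le>k. (b*0)^j / fact j) = (1::real)"
    by (induction k) auto
  show ?thesis using gamma_tail[OF b, of 0 k] s by simp
qed

lemma hb_g1:
  assumes b: "bb n w > 0"
  shows "has_bochner_integral lborel (\<lambda>u. indicator {0..} u *\<^sub>R g1 n w u)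
           (\<Sum>j<2*n. (aa n w ^ j / fact j) * (fact (Suc j) / bb n w ^ Suc (Suc j)))"
proof -
  have eq: "(\<lambda>u. indicator {0..} u *\<^sub>R g1 n w u) =
     (\<lambda>u. \<Sum>j<2*n. (aa n w ^ j / fact j) * (indicator {0..} u * (u^Suc j * exp (-(bb n w*u)))))"
    unfolding g1_def E_def by (auto simp: sum_distrib_left sum_distrib_right power_mult_distrib field_simps)
  show ?thesis unfolding eq
    by (intro has_bochner_integral_sum has_bochner_integral_mult_right base_int b)
qed

lemma hb_g2:
  assumes b: "bb n w > 0"
  shows "has_bochner_integral lborel (\<lambda>u. indicator {0..} u *\<^sub>R g2 n w u)
           (\<Sum>j<2*n+1. (aa n w ^ j / fact j) * (fact j / bb n w ^ Suc j))"
proof -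
  have eq: "(\<lambda>u. indicator {0..} u *\<^sub>R g2 n w u) =
     (\<lambda>u. \<Sum>j<2*n+1. (aa n w ^ j / fact j) * (indicator {0..} u * (u^j * exp (-(bb n w*u)))))"
    unfolding g2_def E_def by (auto simp: sum_distrib_left sum_distrib_right power_mult_distrib field_simps)
  show ?thesis unfolding eq
    by (intro has_bochner_integral_sum has_bochner_integral_mult_right base_int b)
qed

lemma sum_jq: "(\<Sum>j<m. real (Suc j) * q^j) * (1 - q)^2 = 1 - real (Suc m) * q^m + real m * q^Suc m"
  by (induction m) (auto simp: algebra_simps power2_eq_square)

lemma lim_at_top_scaled:
  assumes "((\<lambda>T. f T) \<longlongrightarrow> L) at_top" and n: "n \<ge> 1"
  shows "((\<lambda>\<mu>. f (\<mu> / real n)) \<longlongrightarrow> L) at_top"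
proof (rule filterlim_compose[OF assms(1)])
  have "filterlim (\<lambda>\<mu>::real. (1 / real n) * \<mu>) at_top at_top"
    using n by (intro filterlim_tendsto_pos_mult_at_top[OF tendsto_const] filterlim_ident) auto
  then show "filterlim (\<lambda>\<mu>::real. \<mu> / real n) at_top at_top" by simp
qed

lemma filterlim_at_top_scaled:
  assumes "filterlim f at_top at_top" and n: "n \<ge> 1"
  shows "filterlim (\<lambda>\<mu>. f (\<mu> / real n)) at_top at_top"
proof (rule filterlim_compose[OF assms(1)])
  have "filterlim (\<lambda>\<mu>::real. (1 / real n) * \<mu>) at_top at_top"
    using n by (intro filterlim_tendsto_pos_mult_at_top[OF tendsto_const] filterlim_ident) auto
  then show "filterlim (\<lambda>\<mu>::real. \<mu> / real n) at_top at_top" by simp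
qed

context
  fixes n :: nat and w :: real
  assumes hn: "n \<ge> 2" and hw: "w > 0"
begin

lemma n_pos: "real n > 0" using hn by simp

lemma aa_pos: "aa n w > 0"
  unfolding aa_def using hw by (auto intro!: divide_pos_pos add_pos_nonneg)

lemma bb_eq: "bb n w = (1 - real n * w) / w"
  unfolding bb_def aa_def using hw by (simp add: field_simps)

lemma ab_diff: "aa n w - bb n w = 2 * real n"
  unfolding bb_def by simp

lemma small_iff: "w < 1 / real n \<longleftrightarrow> bb n w > 0"
  unfolding bb_eq using hw n_pos by (simp add: field_simps)

lemma q_eq: "aa n w / bb n w = (1 + real n * w) / (1 - real n * w)"
  unfolding bb_eq aa_def using hw by (cases "1 - real n * w = 0") (simp_all add: field_simps)

lemma S1_eq:
  assumes small: "w < 1 / real n"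
  shows "(\<Sum>j<2*n. (aa n w ^ j / fact j) * (fact (Suc j) / bb n w ^ Suc (Suc j)))
     = ((1 + real n * w) / (1 - real n * w)) ^ (2 * n)
                  * (w / (1 - real n * w) - 1 / (4 * (real n)^2)) + 1 / (4 * (real n)^2)"
proof -
  define a where "a = aa n w"
  define b where "b = bb n w"
  define q where "q = a / b"
  define c where "c = 2 * n"
  have b: "b > 0" unfolding b_def using small small_iff by simp
  have nw: "1 - real n * w > 0" using small n_pos by (simp add: field_simps)
  have ab: "a - b = 2 * real n" unfolding a_def b_def using ab_diff by simp
  have q1: "1 - q \<noteq> 0" unfolding q_def using b ab n_pos by (simp add: field_simps)
  have t: "(a^j / fact j) * (fact (Suc j) / b^Suc (Suc j)) = real (Suc j) * q^j / b^2" for j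
  proof -
    have "fact (Suc j) = real (Suc j) * (fact j :: real)" by (rule fact_Suc)
    then show ?thesis unfolding q_def using b by (simp add: power_divide field_simps power2_eq_square del: fact_Suc of_nat_Suc)
  qed
  have "(\<Sum>j<c. (a^j / fact j) * (fact (Suc j) / b^Suc (Suc j))) = (\<Sum>j<c. real (Suc j) * q^j) / b^2"
    unfolding t by (simp add: sum_divide_distrib)
  also have "(\<Sum>j<c. real (Suc j) * q^j) = (1 - real (Suc c) * q^c + real c * q^Suc c) / (1 - q)^2"
    using sum_jq[where m=c and q=q] q1 by (simp add: field_simps)
  also have "b^2 * (1 - q)^2 = (2 * real n)^2"
  proof -
    have "b * (1 - q) = - (2 * real n)" unfolding q_def using b ab by (simp add: field_simps)
    then have "(b * (1 - q))^2 = (2 * real n)^2" by simp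
    then show ?thesis by (simp add: power_mult_distrib)
  qed
  then have "(1 - real (Suc c) * q^c + real c * q^Suc c) / (1 - q)^2 / b^2
       = (1 - real (Suc c) * q^c + real c * q^Suc c) / (2 * real n)^2"
    by (metis divide_divide_eq_left mult.commute)
  finally have S: "(\<Sum>j<c. (a^j / fact j) * (fact (Suc j) / b^Suc (Suc j)))
      = (1 - real (Suc c) * q^c + real c * q^Suc c) / (2 * real n)^2" .
  have qv: "q = (1 + real n * w) / (1 - real n * w)" unfolding q_def a_def b_def using q_eq .
  define P where "P = q ^ c"
  have "(1 - real (Suc c) * q^c + real c * q^Suc c) / (2 * real n)^2
     = (1 - (2 * real n + 1) * P + 2 * real n * ((1 + real n * w) / (1 - real n * w)) * P) / (2 * real n)^2"
    unfolding P_def c_def using qv by (simp add: algebra_simps)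
  also have "\<dots> = P * (w / (1 - real n * w) - 1 / (4 * (real n)^2)) + 1 / (4 * (real n)^2)"
    using nw n_pos by (simp add: field_simps power2_eq_square)
  finally show ?thesis using S unfolding P_def qv c_def a_def b_def by simp
qed

lemma S2_eq:
  assumes small: "w < 1 / real n"
  shows "(\<Sum>j<2*n+1. (aa n w ^ j / fact j) * (fact j / bb n w ^ Suc j))
     = (1 / (2 * real n)) * (((1 + real n * w) / (1 - real n * w)) ^ (2 * n + 1) - 1)"
proof -
  define a where "a = aa n w"
  define b where "b = bb n w"
  define q where "q = a / b"
  have b: "b > 0" unfolding b_def using small small_iff by simp
  have ab: "a - b = 2 * real n" unfolding a_def b_def using ab_diff by simp
  have q1: "q \<noteq> 1" unfolding q_def using b ab n_pos by (simp add: field_simps)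
  have t: "(a^j / fact j) * (fact j / b^Suc j) = q^j / b" for j
    unfolding q_def using b by (simp add: power_divide field_simps)
  have "(\<Sum>j<2*n+1. (a^j / fact j) * (fact j / b^Suc j)) = (\<Sum>j<2*n+1. q^j) / b"
    unfolding t by (rule sum_divide_distrib[symmetric])
  also have "(\<Sum>j<2*n+1. q^j) = (1 - q^(2*n+1)) / (1 - q)"
    using sum_gp_strict[of q "2*n+1"] q1 by simp
  also have "(1 - q^(2*n+1)) / (1 - q) / b = (q^(2*n+1) - 1) / (2 * real n)"
  proof -
    have "b * (q - 1) = 2 * real n" unfolding q_def using b ab by (simp add: field_simps)
    moreover have "q - 1 \<noteq> 0" using q1 by simp
    ultimately show ?thesis using b n_pos by (simp add: field_simps)
  qed
  finally show ?thesis unfolding q_def a_def b_def q_eq by simp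
qed


end



context
  fixes n :: nat and w :: real
  assumes hn: "n \<ge> 2" and hw: "w > 0"
begin

lemma n_pos': "real n > 0" using hn by simp
lemmas aa_pos' = aa_pos[OF hn hw]
lemmas small_iff' = small_iff[OF hn hw]
lemmas S1_eq' = S1_eq[OF hn hw]
lemmas S2_eq' = S2_eq[OF hn hw]
lemmas q_eq' = q_eq[OF hn hw]
lemma I1_T: "I1 n w \<mu> = integral {0..\<mu> / real n} (g1 n w)"
  using I1_HK hn hw by simp
lemma I2_T: "I2 n w \<mu> = integral {0..\<mu> / real n} (g2 n w)"
  using I2_HK hn hw by simp

lemma au_nonneg: "u \<ge> 0 \<Longrightarrow> aa n w * u \<ge> 0"
  using aa_pos' by simp

lemma g1_nonneg: "u \<ge> 0 \<Longrightarrow> g1 n w u \<ge> 0"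
  unfolding g1_def using E_nonneg[OF au_nonneg] by simp

lemma g2_pos: "u \<ge> 0 \<Longrightarrow> g2 n w u > 0"
  unfolding g2_def using E_pos[OF au_nonneg, of u "2*n+1"] by simp

lemma g2_big: "bb n w \<le> 0 \<Longrightarrow> u \<ge> 0 \<Longrightarrow> g2 n w u \<ge> 1 + aa n w * u"
proof -
  assume b: "bb n w \<le> 0" and u: "u \<ge> 0"
  have e: "exp (- (bb n w * u)) \<ge> 1" using b u by (simp add: mult_nonpos_nonneg)
  have E: "E (2*n+1) (aa n w * u) \<ge> 1 + aa n w * u"
    using E_ge_lin[OF au_nonneg[OF u], of "2*n+1"] hn by simp
  have "1 + aa n w * u \<le> 1 * E (2*n+1) (aa n w * u)" using E by simp
  also have "\<dots> \<le> exp (- (bb n w * u)) * E (2*n+1) (aa n w * u)"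
    using e E_nonneg[OF au_nonneg[OF u]] by (intro mult_right_mono) auto
  finally show ?thesis unfolding g2_def .
qed

lemma int_g1: "(g1 n w has_integral integral {0..T} (g1 n w)) {0..T}"
  by (rule integrable_integral[OF integrable_continuous_interval[OF cont_g1]])
lemma int_g2: "(g2 n w has_integral integral {0..T} (g2 n w)) {0..T}"
  by (rule integrable_integral[OF integrable_continuous_interval[OF cont_g2]])

lemma I2_nonneg: "I2 n w \<mu> \<ge> 0"
  unfolding I2_T by (rule has_integral_nonneg[OF int_g2]) (auto intro: less_imp_le g2_pos)

lemma I1_nonneg: "I1 n w \<mu> \<ge> 0"
  unfolding I1_T by (rule has_integral_nonneg[OF int_g1]) (auto intro: g1_nonneg)

lemma den_pos': "1 + real n * I2 n w \<mu> > 0"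
  using I2_nonneg[of \<mu>] n_pos' by (simp add: add_pos_nonneg)

lemma I2_lower_big:
  assumes b: "bb n w \<le> 0" and mu: "\<mu> \<ge> 0"
  shows "I2 n w \<mu> \<ge> \<mu> / real n"
proof -
  have T: "\<mu> / real n \<ge> 0" using mu n_pos' by simp
  have "((\<lambda>s. 1) has_integral (\<mu> / real n)) {0..\<mu> / real n}"
    using has_integral_const_real[of "1::real" 0 "\<mu> / real n"] T by simp
  then show ?thesis unfolding I2_T
  proof (rule has_integral_le[OF _ int_g2])
    fix s assume "s \<in> {0..\<mu> / real n}"
    then have s: "s \<ge> 0" by simp
    have "aa n w * s \<ge> 0" using aa_pos' s by simp
    then show "1 \<le> g2 n w s" using g2_big[OF b s] by linarith
  qed
qed

lemma I2_at_top_big: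
  assumes b: "bb n w \<le> 0"
  shows "filterlim (I2 n w) at_top at_top"
proof (rule filterlim_at_top_mono)
  show "filterlim (\<lambda>\<mu>. \<mu> / real n) at_top at_top"
    using filterlim_at_top_scaled[OF filterlim_ident, of n] hn by simp
  show "\<forall>\<^sub>F x in at_top. x / real n \<le> I2 n w x"
    using eventually_ge_at_top[of "0::real"] by eventually_elim (rule I2_lower_big[OF b])
qed

lemma I1_0: "I1 n w 0 = 0" unfolding I1_T by simp
lemma I2_0: "I2 n w 0 = 0" unfolding I2_T by simp
lemma k0: "kfun n w 0 = 1" unfolding kfun_def I1_0 I2_0 by simp

lemma upper_big:
  assumes b: "bb n w \<le> 0" and mu: "\<mu> \<ge> 0"
  shows "kfun n w \<mu> \<le> 1"
proof -
  define T where "T = \<mu> / real n"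
  have T: "T \<ge> 0" using mu n_pos' unfolding T_def by simp
  have mu_eq: "\<mu> = real n * T" unfolding T_def using n_pos' by simp
  have h: "((\<lambda>s. 2 * (real n)^2 * g1 n w s + real n * g2 n w s - real n) has_integral
      (2 * (real n)^2 * I1 n w \<mu> + real n * I2 n w \<mu> - real n * T)) {0..T}"
  proof -
    have c: "((\<lambda>s. real n) has_integral (real n * T)) {0..T}"
      using has_integral_const_real[of "real n" 0 T] T by (simp add: mult.commute)
    show ?thesis unfolding I1_T I2_T T_def[symmetric]
      by (rule has_integral_diff[OF has_integral_add[OF has_integral_mult_right[OF int_g1] has_integral_mult_right[OF int_g2]] c])
  qed
  have "0 \<le> 2 * (real n)^2 * I1 n w \<mu> + real n * I2 n w \<mu> - real n * T"
  proof (rule has_integral_nonneg[OF h])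
    fix s assume "s \<in> {0..T}"
    then have s: "s \<ge> 0" by simp
    have "aa n w * s \<ge> 0" using aa_pos' s by simp
    then have "g2 n w s \<ge> 1" using g2_big[OF b s] by linarith
    then have "real n * g2 n w s \<ge> real n" using n_pos' by simp
    moreover have "2 * (real n)^2 * g1 n w s \<ge> 0" using g1_nonneg[OF s] by simp
    ultimately show "0 \<le> 2 * (real n)^2 * g1 n w s + real n * g2 n w s - real n" by linarith
  qed
  then have "1 + \<mu> - 2 * (real n)^2 * I1 n w \<mu> \<le> 1 + real n * I2 n w \<mu>"
    unfolding mu_eq by linarith
  then show ?thesis unfolding kfun_def using den_pos'[of \<mu>] by (simp add: divide_le_eq_1)
qed

lemma bound_eq: "4 * (real n)^2 * w / (1 + real n * w) = 4 * (real n)^2 / aa n w"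
  unfolding aa_def using hw by simp

lemma lower_all:
  assumes mu: "\<mu> \<ge> 0"
  shows "kfun n w \<mu> \<ge> - 4 * (real n)^2 * w / (1 + real n * w)"
proof -
  define T where "T = \<mu> / real n"
  define a where "a = aa n w"
  have a: "a > 0" unfolding a_def using aa_pos' .
  have T: "T \<ge> 0" using mu n_pos' unfolding T_def by simp
  have mu_eq: "\<mu> = real n * T" unfolding T_def using n_pos' by simp
  have h: "((\<lambda>s. real n + (4 * (real n)^3 / a) * g2 n w s - 2 * (real n)^2 * g1 n w s) has_integral
      (real n * T + (4 * (real n)^3 / a) * I2 n w \<mu> - 2 * (real n)^2 * I1 n w \<mu>)) {0..T}"
  proof -
    have c: "((\<lambda>s. real n) has_integral (real n * T)) {0..T}"
      using has_integral_const_real[of "real n" 0 T] T by (simp add: mult.commute)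
    show ?thesis unfolding I1_T I2_T T_def[symmetric]
      by (rule has_integral_diff[OF has_integral_add[OF c has_integral_mult_right[OF int_g2]] has_integral_mult_right[OF int_g1]])
  qed
  have nn: "0 \<le> real n * T + (4 * (real n)^3 / a) * I2 n w \<mu> - 2 * (real n)^2 * I1 n w \<mu>"
  proof (rule has_integral_nonneg[OF h])
    fix s assume "s \<in> {0..T}"
    then have s: "s \<ge> 0" by simp
    define x where "x = a * s"
    have x: "x \<ge> 0" unfolding x_def using a s by simp
    have ineq: "x * E (2*n) x \<le> real (2*n) * E (Suc (2*n)) x" by (rule E_ineq1[OF x])
    define e where "e = exp (- (bb n w * s))"
    have e: "e > 0" unfolding e_def by simp
    have g1e: "g1 n w s = (x / a) * e * E (2*n) x" unfolding g1_def x_def e_def a_def using a aa_pos' by simp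
    have g2e: "g2 n w s = e * E (Suc (2*n)) x" unfolding g2_def x_def e_def a_def by simp
    have "2 * (real n)^2 * g1 n w s = (2 * (real n)^2 * e / a) * (x * E (2*n) x)"
      unfolding g1e by (simp add: field_simps)
    also have "\<dots> \<le> (2 * (real n)^2 * e / a) * (real (2*n) * E (Suc (2*n)) x)"
      using ineq e a by (intro mult_left_mono) auto
    also have "\<dots> = (4 * (real n)^3 / a) * g2 n w s"
      unfolding g2e by (simp add: field_simps power2_eq_square power3_eq_cube)
    finally show "0 \<le> real n + (4 * (real n)^3 / a) * g2 n w s - 2 * (real n)^2 * g1 n w s"
      using n_pos' by linarith
  qed
  then have key: "0 \<le> (1 + \<mu> - 2 * (real n)^2 * I1 n w \<mu>) + (4 * (real n)^2 / a) * (1 + real n * I2 n w \<mu>)"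
  proof -
    have p: "0 \<le> 1 + 4 * (real n)^2 / a" using a by simp
    have "(1 + \<mu> - 2 * (real n)^2 * I1 n w \<mu>) + (4 * (real n)^2 / a) * (1 + real n * I2 n w \<mu>)
        = (1 + 4 * (real n)^2 / a) + (real n * T + (4 * (real n)^3 / a) * I2 n w \<mu> - 2 * (real n)^2 * I1 n w \<mu>)"
      unfolding mu_eq by (simp add: algebra_simps power2_eq_square power3_eq_cube add_divide_distrib)
    then show ?thesis using p nn by linarith
  qed
  have dp: "1 + real n * I2 n w \<mu> > 0" by (rule den_pos')
  have "- (4 * (real n)^2 / a) \<le> (1 + \<mu> - 2 * (real n)^2 * I1 n w \<mu>) / (1 + real n * I2 n w \<mu>)"
    using key dp by (simp add: le_divide_eq algebra_simps)
  then show ?thesis unfolding kfun_def using bound_eq unfolding a_def by simp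
qed


lemma I1_fun: "I1 n w = (\<lambda>\<mu>. integral {0..\<mu> / real n} (g1 n w))"
  by (rule ext) (rule I1_T)
lemma I2_fun: "I2 n w = (\<lambda>\<mu>. integral {0..\<mu> / real n} (g2 n w))"
  by (rule ext) (rule I2_T)

lemma dI1: "\<mu> > 0 \<Longrightarrow> DERIV (I1 n w) \<mu> :> g1 n w (\<mu> / real n) * (1 / real n)"
  unfolding I1_fun by (rule deriv_int_scaled[OF cont_g1]) (use hn in auto)
lemma dI2: "\<mu> > 0 \<Longrightarrow> DERIV (I2 n w) \<mu> :> g2 n w (\<mu> / real n) * (1 / real n)"
  unfolding I2_fun by (rule deriv_int_scaled[OF cont_g2]) (use hn in auto)

lemma dDen: "\<mu> > 0 \<Longrightarrow> DERIV (\<lambda>\<mu>. 1 + real n * I2 n w \<mu>) \<mu> :> g2 n w (\<mu> / real n)"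
proof -
  assume "\<mu> > 0"
  from DERIV_add[OF DERIV_const[of 1] DERIV_cmult[OF dI2[OF this], of "real n"]]
  show ?thesis using n_pos' by simp
qed

lemma lim_I1_small:
  assumes small: "w < 1 / real n"
  shows "(I1 n w \<longlongrightarrow> ((1 + real n * w) / (1 - real n * w)) ^ (2 * n)
                  * (w / (1 - real n * w) - 1 / (4 * (real n)^2)) + 1 / (4 * (real n)^2)) at_top"
proof -
  have b: "bb n w > 0" using small small_iff' by simp
  note hb = hb_g1[OF b]
  have si: "set_integrable lborel {0..} (g1 n w)"
    unfolding set_integrable_def using integrable.intros[OF hb] .
  have v: "(LBINT u:{0..}. g1 n w u) = (\<Sum>j<2*n. (aa n w ^ j / fact j) * (fact (Suc j) / bb n w ^ Suc (Suc j)))"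
    unfolding set_lebesgue_integral_def using has_bochner_integral_integral_eq[OF hb] .
  have "((\<lambda>T. LBINT u:{0..T}. g1 n w u) \<longlongrightarrow> (LBINT u:{0..}. g1 n w u)) at_top"
    by (rule tendsto_set_lebesgue_integral_at_top[OF _ si]) auto
  then have "((\<lambda>\<mu>. LBINT u:{0..\<mu> / real n}. g1 n w u) \<longlongrightarrow> (LBINT u:{0..}. g1 n w u)) at_top"
    by (rule lim_at_top_scaled) (use hn in auto)
  moreover have "I1 n w = (\<lambda>\<mu>. LBINT u:{0..\<mu> / real n}. g1 n w u)"
    using I1_LB hn hw by (intro ext) simp
  ultimately show ?thesis using v S1_eq'[OF small] by simp
qed

lemma lim_I2_small:
  assumes small: "w < 1 / real n"
  shows "(I2 n w \<longlongrightarrow> (1 / (2 * real n)) * (((1 + real n * w) / (1 - real n * w)) ^ (2 * n + 1) - 1)) at_top"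
proof -
  have b: "bb n w > 0" using small small_iff' by simp
  note hb = hb_g2[OF b]
  have si: "set_integrable lborel {0..} (g2 n w)"
    unfolding set_integrable_def using integrable.intros[OF hb] .
  have v: "(LBINT u:{0..}. g2 n w u) = (\<Sum>j<2*n+1. (aa n w ^ j / fact j) * (fact j / bb n w ^ Suc j))"
    unfolding set_lebesgue_integral_def using has_bochner_integral_integral_eq[OF hb] .
  have "((\<lambda>T. LBINT u:{0..T}. g2 n w u) \<longlongrightarrow> (LBINT u:{0..}. g2 n w u)) at_top"
    by (rule tendsto_set_lebesgue_integral_at_top[OF _ si]) auto
  then have "((\<lambda>\<mu>. LBINT u:{0..\<mu> / real n}. g2 n w u) \<longlongrightarrow> (LBINT u:{0..}. g2 n w u)) at_top"
    by (rule lim_at_top_scaled) (use hn in auto)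
  moreover have "I2 n w = (\<lambda>\<mu>. LBINT u:{0..\<mu> / real n}. g2 n w u)"
    using I2_LB hn hw by (intro ext) simp
  ultimately show ?thesis using v S2_eq'[OF small] by simp
qed

lemma L2_pos:
  assumes small: "w < 1 / real n"
  shows "(1 / (2 * real n)) * (((1 + real n * w) / (1 - real n * w)) ^ (2 * n + 1) - 1) > 0"
proof -
  have nw: "1 - real n * w > 0" using small n_pos' by (simp add: field_simps)
  have q: "(1 + real n * w) / (1 - real n * w) > 1" using nw hw n_pos' by (simp add: field_simps)
  have "((1 + real n * w) / (1 - real n * w)) ^ (2 * n + 1) > 1"
    using q by (intro one_less_power) auto
  then show ?thesis using n_pos' by simp
qed

lemma den_top_big:
  assumes b: "bb n w \<le> 0"
  shows "filterlim (\<lambda>\<mu>. 1 + real n * I2 n w \<mu>) at_top at_top"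
  by (intro filterlim_tendsto_add_at_top[OF tendsto_const] filterlim_tendsto_pos_mult_at_top[OF tendsto_const n_pos' I2_at_top_big[OF b]])

lemma g2_top_big:
  assumes b: "bb n w \<le> 0"
  shows "filterlim (\<lambda>\<mu>. g2 n w (\<mu> / real n)) at_top at_top"
proof (rule filterlim_at_top_scaled)
  show "filterlim (g2 n w) at_top at_top"
  proof (rule filterlim_at_top_mono)
    show "filterlim (\<lambda>T. 1 + aa n w * T) at_top at_top"
      by (intro filterlim_tendsto_add_at_top[OF tendsto_const] filterlim_tendsto_pos_mult_at_top[OF tendsto_const aa_pos' filterlim_ident])
    show "\<forall>\<^sub>F T in at_top. 1 + aa n w * T \<le> g2 n w T"
      using eventually_ge_at_top[of "0::real"] by eventually_elim (rule g2_big[OF b])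
  qed
qed (use hn in auto)

lemma lim_I3_big:
  assumes b: "bb n w \<le> 0"
  shows "(I3 n w \<longlongrightarrow> 0) at_top"
proof -
  have "((\<lambda>\<mu>. \<mu> / (1 + real n * I2 n w \<mu>)) \<longlongrightarrow> 0) at_top"
  proof (rule lhospital_at_top_at_top[where f'="\<lambda>_. 1" and g'="\<lambda>\<mu>. g2 n w (\<mu> / real n)"])
    show "filterlim (\<lambda>\<mu>. 1 + real n * I2 n w \<mu>) at_top at_top" by (rule den_top_big[OF b])
    show "\<forall>\<^sub>F x in at_top. g2 n w (x / real n) \<noteq> 0"
      using eventually_ge_at_top[of "0::real"] by eventually_elim (use g2_pos n_pos' in \<open>auto simp: less_imp_neq[symmetric]\<close>)
    show "\<forall>\<^sub>F x in at_top. DERIV (\<lambda>\<mu>. \<mu>) x :> 1"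
      by (auto intro!: derivative_eq_intros)
    show "\<forall>\<^sub>F x in at_top. DERIV (\<lambda>\<mu>. 1 + real n * I2 n w \<mu>) x :> g2 n w (x / real n)"
      using eventually_gt_at_top[of "0::real"] by eventually_elim (rule dDen)
    show "((\<lambda>x. 1 / g2 n w (x / real n)) \<longlongrightarrow> 0) at_top"
      using tendsto_inverse_0_at_top[OF g2_top_big[OF b]] by (simp add: divide_inverse)
  qed
  then show ?thesis unfolding I3_def .
qed

lemma lim_I4_big:
  assumes b: "bb n w \<le> 0"
  shows "(I4 n w \<longlongrightarrow> 2 * w / (1 + real n * w)) at_top"
proof -
  define a where "a = aa n w"
  have a: "a > 0" unfolding a_def by (rule aa_pos')
  have lim_x: "filterlim (\<lambda>\<mu>. a * (\<mu> / real n)) at_top at_top"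
    by (intro filterlim_tendsto_pos_mult_at_top[OF tendsto_const a] filterlim_at_top_scaled[OF filterlim_ident]) (use hn in auto)
  have R: "((\<lambda>\<mu>. (1 / (a * real n)) * ((a * (\<mu> / real n)) * E (2*n) (a * (\<mu> / real n)) / E (Suc (2*n)) (a * (\<mu> / real n))))
      \<longlongrightarrow> (1 / (a * real n)) * real (2*n)) at_top"
    by (intro tendsto_mult_left filterlim_compose[OF ratio_lim lim_x]) (use hn in auto)
  have val: "(1 / (a * real n)) * real (2*n) = 2 * w / (1 + real n * w)"
  proof -
    have "(1 / (a * real n)) * real (2*n) = 2 / a" using n_pos' a by (simp add: field_simps)
    also have "\<dots> = 2 * w / (1 + real n * w)" unfolding a_def aa_def by simp
    finally show ?thesis .
  qed
  have "((\<lambda>\<mu>. I1 n w \<mu> / (1 + real n * I2 n w \<mu>)) \<longlongrightarrow> 2 * w / (1 + real n * w)) at_top"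
  proof (rule lhospital_at_top_at_top[where f'="\<lambda>\<mu>. g1 n w (\<mu> / real n) * (1 / real n)" and g'="\<lambda>\<mu>. g2 n w (\<mu> / real n)"])
    show "filterlim (\<lambda>\<mu>. 1 + real n * I2 n w \<mu>) at_top at_top" by (rule den_top_big[OF b])
    show "\<forall>\<^sub>F x in at_top. g2 n w (x / real n) \<noteq> 0"
      using eventually_ge_at_top[of "0::real"] by eventually_elim (use g2_pos n_pos' in \<open>auto simp: less_imp_neq[symmetric]\<close>)
    show "\<forall>\<^sub>F x in at_top. DERIV (I1 n w) x :> g1 n w (x / real n) * (1 / real n)"
      using eventually_gt_at_top[of "0::real"] by eventually_elim (rule dI1)
    show "\<forall>\<^sub>F x in at_top. DERIV (\<lambda>\<mu>. 1 + real n * I2 n w \<mu>) x :> g2 n w (x / real n)"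
      using eventually_gt_at_top[of "0::real"] by eventually_elim (rule dDen)
    have ev: "\<forall>\<^sub>F \<mu> in at_top. (1 / (a * real n)) * ((a * (\<mu> / real n)) * E (2*n) (a * (\<mu> / real n)) / E (Suc (2*n)) (a * (\<mu> / real n)))
        = g1 n w (\<mu> / real n) * (1 / real n) / g2 n w (\<mu> / real n)"
      using eventually_ge_at_top[of "0::real"]
    proof eventually_elim
      case (elim \<mu>)
      define T where "T = \<mu> / real n"
      have T: "T \<ge> 0" unfolding T_def using elim n_pos' by simp
      have Ep: "E (Suc (2*n)) (a * T) > 0" using E_pos[of "a*T" "Suc (2*n)"] a T by simp
      show ?case unfolding T_def[symmetric] g1_def g2_def a_def[symmetric]
        using Ep a n_pos' by (simp add: field_simps)
    qed
    show "((\<lambda>x. g1 n w (x / real n) * (1 / real n) / g2 n w (x / real n)) \<longlongrightarrow> 2 * w / (1 + real n * w)) at_top"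
      using tendsto_cong[OF ev] R val by simp
  qed
  then show ?thesis unfolding I4_def .
qed

end


lemma SUP_top:
  fixes f :: "real \<Rightarrow> real"
  assumes "filterlim f at_top at_top"
  shows "(SUP \<mu>\<in>{0..}. ereal (f \<mu>)) = \<infinity>"
proof (rule ereal_top)
  fix B :: real
  from assms have "eventually (\<lambda>x. f x \<ge> B) at_top" by (simp add: filterlim_at_top)
  then obtain N where N: "\<forall>x\<ge>N. f x \<ge> B" by (auto simp: eventually_at_top_linorder)
  then have "ereal B \<le> ereal (f (max N 0))" by simp
  also have "\<dots> \<le> (SUP \<mu>\<in>{0..}. ereal (f \<mu>))" by (rule SUP_upper) auto
  finally show "ereal B \<le> (SUP \<mu>\<in>{0..}. ereal (f \<mu>))" .
qed

lemma INF_lim: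
  fixes f :: "real \<Rightarrow> real"
  assumes lim: "(f \<longlongrightarrow> l) at_top" and lb: "\<And>x. x \<ge> 0 \<Longrightarrow> l \<le> f x"
  shows "(INF \<mu>\<in>{0..}. ereal (f \<mu>)) = ereal l"
proof (rule antisym)
  show "ereal l \<le> (INF \<mu>\<in>{0..}. ereal (f \<mu>))" by (rule INF_greatest) (use lb in auto)
  have l2: "((\<lambda>x. ereal (f x)) \<longlongrightarrow> ereal l) at_top" using lim by (rule tendsto_ereal)
  show "(INF \<mu>\<in>{0..}. ereal (f \<mu>)) \<le> ereal l"
  proof (rule tendsto_le[OF trivial_limit_at_top_linorder l2 tendsto_const])
    show "\<forall>\<^sub>F x in at_top. (INF \<mu>\<in>{0..}. ereal (f \<mu>)) \<le> ereal (f x)"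
      using eventually_ge_at_top[of "0::real"] by eventually_elim (rule INF_lower, simp)
  qed
qed

lemma kfun_split:
  assumes "1 + real n * I2 n w \<mu> > 0"
  shows "kfun n w \<mu> = (1 / (1 + real n * I2 n w \<mu>) - 2 * (real n)^2 * I4 n w \<mu>) + I3 n w \<mu>"
  unfolding kfun_def I3_def I4_def by (simp add: diff_divide_distrib add_divide_distrib)

theorem lemma4p3:
  fixes n :: nat and w :: real
  assumes hn: "n \<ge> 2" and hw: "w > 0"
  defines "L1 \<equiv> ((1 + real n * w) / (1 - real n * w)) ^ (2 * n)
                  * (w / (1 - real n * w) - 1 / (4 * (real n)^2)) + 1 / (4 * (real n)^2)"
      and "L2 \<equiv> (1 / (2 * real n)) * (((1 + real n * w) / (1 - real n * w)) ^ (2 * n + 1) - 1)"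
  shows "((w < 1 / real n \<longrightarrow> (I1 n w \<longlongrightarrow> L1) at_top) \<and> (w \<ge> 1 / real n \<longrightarrow> filterlim (I1 n w) at_top at_top)) \<and>
     ((w < 1 / real n \<longrightarrow> (I2 n w \<longlongrightarrow> L2) at_top) \<and> (w \<ge> 1 / real n \<longrightarrow> filterlim (I2 n w) at_top at_top)) \<and>
     ((w < 1 / real n \<longrightarrow> filterlim (I3 n w) at_top at_top) \<and> (w \<ge> 1 / real n \<longrightarrow> (I3 n w \<longlongrightarrow> 0) at_top)) \<and>
     ((w < 1 / real n \<longrightarrow> (I4 n w \<longlongrightarrow> L1 / (1 + real n * L2)) at_top) \<and> (w \<ge> 1 / real n \<longrightarrow> (I4 n w \<longlongrightarrow> 2 * w / (1 + real n * w)) at_top)) \<and>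
     ((w < 1 / real n \<longrightarrow> filterlim (kfun n w) at_top at_top) \<and> (w \<ge> 1 / real n \<longrightarrow> (kfun n w \<longlongrightarrow> - 4 * (real n)^2 * w / (1 + real n * w)) at_top)) \<and>
     ((w < 1 / real n \<longrightarrow> (SUP \<mu>\<in>{0..}. ereal (kfun n w \<mu>)) = \<infinity>) \<and> (w \<ge> 1 / real n \<longrightarrow> (SUP \<mu>\<in>{0..}. ereal (kfun n w \<mu>)) = 1)) \<and>
     ((w \<ge> 1 / real n \<longrightarrow> (INF \<mu>\<in>{0..}. ereal (kfun n w \<mu>)) = ereal (- 4 * (real n)^2 * w / (1 + real n * w))) \<and> (INF \<mu>\<in>{0..}. ereal (kfun n w \<mu>)) \<ge> ereal (- 4 * (real n)^2 * w / (1 + real n * w)))"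
proof -
  have np: "real n > 0" using hn by simp
  have dp: "\<And>\<mu>. 1 + real n * I2 n w \<mu> > 0" by (rule den_pos'[OF hn hw])
  have Ssmall: "(I1 n w \<longlongrightarrow> L1) at_top \<and> (I2 n w \<longlongrightarrow> L2) at_top \<and> filterlim (I3 n w) at_top at_top
      \<and> (I4 n w \<longlongrightarrow> L1 / (1 + real n * L2)) at_top \<and> filterlim (kfun n w) at_top at_top
      \<and> (SUP \<mu>\<in>{0..}. ereal (kfun n w \<mu>)) = \<infinity>" if s: "w < 1 / real n"
  proof -
    have A1: "(I1 n w \<longlongrightarrow> L1) at_top" unfolding L1_def by (rule lim_I1_small[OF hn hw s])
    have A2: "(I2 n w \<longlongrightarrow> L2) at_top" unfolding L2_def by (rule lim_I2_small[OF hn hw s])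
    have L2p: "L2 > 0" unfolding L2_def by (rule L2_pos[OF hn hw s])
    have Dlim: "((\<lambda>\<mu>. 1 + real n * I2 n w \<mu>) \<longlongrightarrow> 1 + real n * L2) at_top"
      by (intro tendsto_intros A2)
    have Dp: "1 + real n * L2 > 0" using L2p np by (simp add: add_pos_pos)
    have invlim: "((\<lambda>\<mu>. 1 / (1 + real n * I2 n w \<mu>)) \<longlongrightarrow> 1 / (1 + real n * L2)) at_top"
      using Dp by (intro tendsto_divide[OF tendsto_const Dlim]) auto
    have A3: "filterlim (I3 n w) at_top at_top"
    proof -
      have "filterlim (\<lambda>\<mu>. 1 / (1 + real n * I2 n w \<mu>) * \<mu>) at_top at_top"
        by (rule filterlim_tendsto_pos_mult_at_top[OF invlim _ filterlim_ident]) (use Dp in simp)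
      moreover have "(\<lambda>\<mu>. 1 / (1 + real n * I2 n w \<mu>) * \<mu>) = I3 n w"
        unfolding I3_def by (auto simp: field_simps)
      ultimately show ?thesis by simp
    qed
    have A4: "(I4 n w \<longlongrightarrow> L1 / (1 + real n * L2)) at_top"
      unfolding I4_def using Dp by (intro tendsto_divide A1 Dlim) auto
    have A5: "filterlim (kfun n w) at_top at_top"
    proof -
      have "filterlim (\<lambda>\<mu>. (1 / (1 + real n * I2 n w \<mu>) - 2 * (real n)^2 * I4 n w \<mu>) + I3 n w \<mu>) at_top at_top"
        by (rule filterlim_tendsto_add_at_top[OF tendsto_diff[OF invlim tendsto_mult[OF tendsto_const A4]] A3])
      moreover have "(\<lambda>\<mu>. (1 / (1 + real n * I2 n w \<mu>) - 2 * (real n)^2 * I4 n w \<mu>) + I3 n w \<mu>) = kfun n w"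
        using kfun_split[OF dp] by auto
      ultimately show ?thesis by simp
    qed
    have A6: "(SUP \<mu>\<in>{0..}. ereal (kfun n w \<mu>)) = \<infinity>" by (rule SUP_top[OF A5])
    show ?thesis using A1 A2 A3 A4 A5 A6 by blast
  qed
  have Sbig: "filterlim (I1 n w) at_top at_top \<and> filterlim (I2 n w) at_top at_top \<and> (I3 n w \<longlongrightarrow> 0) at_top
      \<and> (I4 n w \<longlongrightarrow> 2 * w / (1 + real n * w)) at_top
      \<and> (kfun n w \<longlongrightarrow> - 4 * (real n)^2 * w / (1 + real n * w)) at_top
      \<and> (SUP \<mu>\<in>{0..}. ereal (kfun n w \<mu>)) = 1
      \<and> (INF \<mu>\<in>{0..}. ereal (kfun n w \<mu>)) = ereal (- 4 * (real n)^2 * w / (1 + real n * w))"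
    if s: "w \<ge> 1 / real n"
  proof -
    have b: "bb n w \<le> 0" using small_iff[OF hn hw] s by linarith
    have B2: "filterlim (I2 n w) at_top at_top" by (rule I2_at_top_big[OF hn hw b])
    have B3: "(I3 n w \<longlongrightarrow> 0) at_top" by (rule lim_I3_big[OF hn hw b])
    have B4: "(I4 n w \<longlongrightarrow> 2 * w / (1 + real n * w)) at_top" by (rule lim_I4_big[OF hn hw b])
    have Dtop: "filterlim (\<lambda>\<mu>. 1 + real n * I2 n w \<mu>) at_top at_top" by (rule den_top_big[OF hn hw b])
    have B1: "filterlim (I1 n w) at_top at_top"
    proof -
      have "filterlim (\<lambda>\<mu>. I4 n w \<mu> * (1 + real n * I2 n w \<mu>)) at_top at_top"
        by (rule filterlim_tendsto_pos_mult_at_top[OF B4 _ Dtop]) (use hw np in \<open>simp add: add_pos_pos\<close>)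
      moreover have "(\<lambda>\<mu>. I4 n w \<mu> * (1 + real n * I2 n w \<mu>)) = I1 n w"
        unfolding I4_def using dp by (auto simp: less_imp_neq[symmetric])
      ultimately show ?thesis by simp
    qed
    have inv0: "((\<lambda>\<mu>. 1 / (1 + real n * I2 n w \<mu>)) \<longlongrightarrow> 0) at_top"
      using tendsto_inverse_0_at_top[OF Dtop] by (simp add: divide_inverse)
    have B5: "(kfun n w \<longlongrightarrow> - 4 * (real n)^2 * w / (1 + real n * w)) at_top"
    proof -
      have "((\<lambda>\<mu>. (1 / (1 + real n * I2 n w \<mu>) - 2 * (real n)^2 * I4 n w \<mu>) + I3 n w \<mu>)
         \<longlongrightarrow> (0 - 2 * (real n)^2 * (2 * w / (1 + real n * w))) + 0) at_top"
        (is "(?F \<longlongrightarrow> ?v) _")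
        by (intro tendsto_add tendsto_diff inv0 tendsto_mult tendsto_const B4 B3)
      moreover have "?F = kfun n w"
        using kfun_split[OF dp] by auto
      moreover have "?v = - 4 * (real n)^2 * w / (1 + real n * w)"
        by (simp add: field_simps)
      ultimately show ?thesis by metis
    qed
    have B6: "(SUP \<mu>\<in>{0..}. ereal (kfun n w \<mu>)) = 1"
    proof (rule antisym)
      show "(SUP \<mu>\<in>{0..}. ereal (kfun n w \<mu>)) \<le> 1"
        by (rule SUP_least) (use upper_big[OF hn hw b] in auto)
      have "ereal (kfun n w 0) \<le> (SUP \<mu>\<in>{0..}. ereal (kfun n w \<mu>))" by (rule SUP_upper) auto
      then show "1 \<le> (SUP \<mu>\<in>{0..}. ereal (kfun n w \<mu>))" using k0[OF hn hw] by (simp add: one_ereal_def)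
    qed
    have B7: "(INF \<mu>\<in>{0..}. ereal (kfun n w \<mu>)) = ereal (- 4 * (real n)^2 * w / (1 + real n * w))"
      by (rule INF_lim[OF B5]) (use lower_all[OF hn hw] in auto)
    show ?thesis using B1 B2 B3 B4 B5 B6 B7 by blast
  qed
  have C7: "(INF \<mu>\<in>{0..}. ereal (kfun n w \<mu>)) \<ge> ereal (- 4 * (real n)^2 * w / (1 + real n * w))"
    by (rule INF_greatest) (use lower_all[OF hn hw] in auto)
  show ?thesis using Ssmall Sbig C7 by blast
qed

end
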